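(* Let $\Gamma\colon\Delta(\mathcal{Y})\to2^{\mathcal{V}}$ be a property that is both identified by $\nu$ and elicited by a scoring function $s$ with convex superprediction set. Let $\gamma\in\mathcal{V}$ with $\Gamma^{-1}(\gamma)\ne\emptyset$. Then $\mathcal{H}_{s_\gamma}=\mathcal{H}_{\nu_\gamma}$, where $\mathcal{H}_{s_\gamma}=\operatorname{cl}\{g\in C(\mathcal{Y}):g\le\beta(s_\gamma-s_c)\text{ for some }\beta\ge0,c\in\mathcal{V}\}$ and $\mathcal{H}_{\nu_\gamma}=\operatorname{cl}\{g\in C(\mathcal{Y}):g\le\alpha\nu_\gamma\text{ for some }\alpha\in\mathbb{R}\}$, closures in the $\sigma(C(\mathcal{Y}),\mathrm{ca}(\mathcal{Y}))$-topology.
   Context: $\mathcal{Y}$ compact metrizable; $C(\mathcal{Y})$ continuous real functions with pointwise order; $\mathrm{ca}(\mathcal{Y})$ finite signed Borel measures, $\langle\phi,f\rangle=\int f\,d\phi$; $\Delta(\mathcal{Y})$ Borel probability measures, $\mathbb{E}_\phi[f]=\langle\phi,f\rangle$; $\sigma(C(\mathcal{Y}),\mathrm{ca}(\mathcal{Y}))$ is the coarsest topology on $C(\mathcal{Y})$ making all $f\mapsto\langle\phi,f\rangle$ continuous. Level set: $\Gamma^{-1}(\gamma)=\{\phi\in\Delta(\mathcal{Y}):\gamma\in\Gamma(\phi)\}$. $s$ (with $s_\gamma:=s(\cdot,\gamma)\in C(\mathcal{Y})$) \emph{elicits} $\Gamma$ if $\Gamma(\phi)=\operatorname{argmin}_{c\in\mathcal{V}}\mathbb{E}_\phi[s_c]$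 for all $\phi$; $\nu$ (with $\nu_\gamma:=\nu(\cdot,\gamma)\in C(\mathcal{Y})$) \emph{identifies} $\Gamma$ if $\mathbb{E}_\phi[\nu_\gamma]=0\iff\gamma\in\Gamma(\phi)$. Superprediction set: $\operatorname{spr}(s)=\{g\in C(\mathcal{Y}):\exists c\in\mathcal{V},\ s_c\le g\}$. *)

theory Defs
  imports "HOL-Probability.Probability"
begin

definition Cfun :: "('y::topological_space \<Rightarrow> real) set" where
  "Cfun = {f. continuous_on UNIV f}"

text \<open>A finite signed Borel measure phi in ca(Y)
  is represented (Jordan decomposition) as a pair (M1, M2) of finite Borel measures,
  with pairing <phi, f> = integral f dM1 - integral f dM2.\<close>
definition fin_borel :: "'y::topological_space measure \<Rightarrow> bool" where
  "fin_borel M \<longleftrightarrow> sets M = sets borel \<and> finite_measure M"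

definition pairing :: "'y::topological_space measure \<times> 'y measure \<Rightarrow> ('y \<Rightarrow> real) \<Rightarrow> real" where
  "pairing \<phi> f = integral\<^sup>L (fst \<phi>) f - integral\<^sup>L (snd \<phi>) f"

definition ca :: "('y::topological_space measure \<times> 'y measure) set" where
  "ca = {\<phi>. fin_borel (fst \<phi>) \<and> fin_borel (snd \<phi>)}"

definition Prob :: "'y::topological_space measure set" where
  "Prob = {M. sets M = sets borel \<and> prob_space M}"

definition expect :: "'y::topological_space measure \<Rightarrow> ('y \<Rightarrow> real) \<Rightarrow> real" where
  "expect M f = integral\<^sup>L M f"

definition weak_top :: "('y::topological_space \<Rightarrow> real) topology" where
  "weak_top = topology_generated_by
     {{f \<in> Cfun. pairing \<phi> f \<in> U} | \<phi> U. \<phi> \<in> ca \<and> open U}"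

definition elicits :: "('y::topological_space \<Rightarrow> 'v \<Rightarrow> real) \<Rightarrow> 'v set \<Rightarrow> ('y measure \<Rightarrow> 'v set) \<Rightarrow> bool" where
  "elicits s V \<Gamma> \<longleftrightarrow> (\<forall>c\<in>V. (\<lambda>y. s y c) \<in> Cfun) \<and>
     (\<forall>\<phi>\<in>Prob. \<Gamma> \<phi> = {c \<in> V. \<forall>c'\<in>V. expect \<phi> (\<lambda>y. s y c) \<le> expect \<phi> (\<lambda>y. s y c')})"

definition identifies :: "('y::topological_space \<Rightarrow> 'v \<Rightarrow> real) \<Rightarrow> 'v set \<Rightarrow> ('y measure \<Rightarrow> 'v set) \<Rightarrow> bool" where
  "identifies \<nu> V \<Gamma> \<longleftrightarrow> (\<forall>c\<in>V. (\<lambda>y. \<nu> y c) \<in> Cfun) \<and>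
     (\<forall>\<phi>\<in>Prob. \<forall>\<gamma>\<in>V. expect \<phi> (\<lambda>y. \<nu> y \<gamma>) = 0 \<longleftrightarrow> \<gamma> \<in> \<Gamma> \<phi>)"

definition level_set :: "('y::topological_space measure \<Rightarrow> 'v set) \<Rightarrow> 'v \<Rightarrow> 'y measure set" where
  "level_set \<Gamma> \<gamma> = {\<phi> \<in> Prob. \<gamma> \<in> \<Gamma> \<phi>}"

definition spr :: "('y::topological_space \<Rightarrow> 'v \<Rightarrow> real) \<Rightarrow> 'v set \<Rightarrow> ('y \<Rightarrow> real) set" where
  "spr s V = {g \<in> Cfun. \<exists>c\<in>V. \<forall>y. s y c \<le> g y}"

definition convex_fset :: "('y \<Rightarrow> real) set \<Rightarrow> bool" where
  "convex_fset A \<longleftrightarrow> (\<forall>g\<in>A. \<forall>h\<in>A. \<forall>t::real. 0 \<le> t \<and> t \<le> 1 \<longrightarrow>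
      (\<lambda>y. t * g y + (1 - t) * h y) \<in> A)"

definition H_s :: "('y::topological_space \<Rightarrow> 'v \<Rightarrow> real) \<Rightarrow> 'v set \<Rightarrow> 'v \<Rightarrow> ('y \<Rightarrow> real) set" where
  "H_s s V \<gamma> = weak_top closure_of
     {g \<in> Cfun. \<exists>\<beta>\<ge>0. \<exists>c\<in>V. \<forall>y. g y \<le> \<beta> * (s y \<gamma> - s y c)}"

definition H_nu :: "('y::topological_space \<Rightarrow> 'v \<Rightarrow> real) \<Rightarrow> 'v \<Rightarrow> ('y \<Rightarrow> real) set" where
  "H_nu \<nu> \<gamma> = weak_top closure_of {g \<in> Cfun. \<exists>\<alpha>::real. \<forall>y. g y \<le> \<alpha> * \<nu> y \<gamma>}"

end

theory Submission
  imports Defs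
begin



lemma weak_nbhd:
  assumes "openin weak_top W" "g \<in> W"
  shows "\<exists>(n::nat) \<phi> \<epsilon>. \<epsilon> > 0 \<and> (\<forall>i<n. \<phi> i \<in> ca) \<and>
     {f \<in> Cfun. \<forall>i<n. \<bar>pairing (\<phi> i) f - pairing (\<phi> i) g\<bar> < \<epsilon>} \<subseteq> W"
proof -
  have "generate_topology_on {{f \<in> Cfun. pairing \<phi> f \<in> U} | \<phi> U. \<phi> \<in> ca \<and> open U} W"
    using assms(1) unfolding weak_top_def openin_topology_generated_by_iff .
  then show ?thesis using assms(2)
  proof (induction arbitrary: g)
    case Empty
    then show ?case by simp
  next
    case (Int a b)
    from Int.IH(1)[OF IntD1[OF Int.prems]] obtain n1 :: nat and \<phi>1 \<epsilon>1 where
      1: "\<epsilon>1 > 0" "\<forall>i<n1. \<phi>1 i \<in> ca" "{f \<in> Cfun. \<forall>i<n1. \<bar>pairing (\<phi>1 i) f - pairing (\<phi>1 i) g\<bar> < \<epsilon>1} \<subseteq> a"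
      by meson
    from Int.IH(2)[OF IntD2[OF Int.prems]] obtain n2 :: nat and \<phi>2 \<epsilon>2 where
      2: "\<epsilon>2 > 0" "\<forall>i<n2. \<phi>2 i \<in> ca" "{f \<in> Cfun. \<forall>i<n2. \<bar>pairing (\<phi>2 i) f - pairing (\<phi>2 i) g\<bar> < \<epsilon>2} \<subseteq> b"
      by meson
    define \<phi> where "\<phi> i = (if i < n1 then \<phi>1 i else \<phi>2 (i - n1))" for i
    show ?case
    proof (intro exI conjI)
      show "min \<epsilon>1 \<epsilon>2 > 0" using 1 2 by simp
      show "\<forall>i<n1+n2. \<phi> i \<in> ca" using 1 2 by (auto simp: \<phi>_def)
      show "{f \<in> Cfun. \<forall>i<n1+n2. \<bar>pairing (\<phi> i) f - pairing (\<phi> i) g\<bar> < min \<epsilon>1 \<epsilon>2} \<subseteq> a \<inter> b"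
      proof safe
        fix f assume f: "f \<in> Cfun" "\<forall>i<n1+n2. \<bar>pairing (\<phi> i) f - pairing (\<phi> i) g\<bar> < min \<epsilon>1 \<epsilon>2"
        have "\<forall>i<n1. \<bar>pairing (\<phi>1 i) f - pairing (\<phi>1 i) g\<bar> < \<epsilon>1"
        proof safe
          fix i assume "i < n1" then show "\<bar>pairing (\<phi>1 i) f - pairing (\<phi>1 i) g\<bar> < \<epsilon>1"
            using f(2)[rule_format, of i] by (simp add: \<phi>_def)
        qed
        then show "f \<in> a" using 1(3) f(1) by blast
        have "\<forall>i<n2. \<bar>pairing (\<phi>2 i) f - pairing (\<phi>2 i) g\<bar> < \<epsilon>2"
        proof safe
          fix i assume "i < n2" then show "\<bar>pairing (\<phi>2 i) f - pairing (\<phi>2 i) g\<bar> < \<epsilon>2"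
            using f(2)[rule_format, of "i + n1"] by (simp add: \<phi>_def)
        qed
        then show "f \<in> b" using 2(3) f(1) by blast
      qed
    qed
  next
    case (UN K)
    then obtain k where "k \<in> K" "g \<in> k" by auto
    with UN.IH[of k g] show ?case by blast
  next
    case (Basis s)
    then obtain \<psi> U where s: "s = {f \<in> Cfun. pairing \<psi> f \<in> U}" "\<psi> \<in> ca" "open U" by auto
    with Basis.prems have g: "g \<in> Cfun" "pairing \<psi> g \<in> U" by auto
    obtain e where e: "e > 0" "\<And>y. dist y (pairing \<psi> g) < e \<Longrightarrow> y \<in> U"
      using s(3) g(2) unfolding open_dist by blast
    show ?case
    proof (intro exI conjI)
      show "e > 0" by fact
      show "\<forall>i<1::nat. (\<lambda>_. \<psi>) i \<in> ca" using s by simp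
      show "{f \<in> Cfun. \<forall>i<1::nat. \<bar>pairing ((\<lambda>_. \<psi>) i) f - pairing ((\<lambda>_. \<psi>) i) g\<bar> < e} \<subseteq> s"
        using e by (auto simp: s dist_real_def)
    qed
  qed
qed

lemma ca_nonempty: "(null_measure borel, null_measure borel) \<in> ca"
  by (auto simp: ca_def fin_borel_def intro!: finite_measureI)

lemma topspace_weak: "topspace weak_top = Cfun"
  unfolding weak_top_def topology_generated_by_topspace
  using ca_nonempty by (auto intro!: exI[where x="(null_measure borel, null_measure borel)"] exI[where x=UNIV])



lemma hb_step:
  fixes q :: "(nat\<Rightarrow>real) \<Rightarrow> real"
  assumes sub: "\<And>u v. q (\<lambda>i. u i + v i) \<le> q u + q v"
    and hom: "\<And>t u. t > 0 \<Longrightarrow> q (\<lambda>i. t * u i) = t * q u"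
    and inv: "\<And>t x. (\<forall>i\<ge>k. x i = 0) \<Longrightarrow> t*b + (\<Sum>i<k. a i * x i) \<le> q (\<lambda>i. t * p i + x i)"
  shows "\<exists>c. \<forall>t x. (\<forall>i\<ge>Suc k. x i = 0) \<longrightarrow> t*b + (\<Sum>i<Suc k. (a(k:=c)) i * x i) \<le> q (\<lambda>i. t * p i + x i)"
proof -
  define \<phi> where "\<phi> t x = t*b + (\<Sum>i<k. a i * x i)" for t x
  define e where "e = (\<lambda>i::nat. if i = k then (1::real) else 0)"
  define S where "S = {(t::real,x::nat\<Rightarrow>real). \<forall>i\<ge>k. x i = 0}"
  have inv': "(t,x) \<in> S \<Longrightarrow> \<phi> t x \<le> q (\<lambda>i. t * p i + x i)" for t x
    using inv by (auto simp: S_def \<phi>_def)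
  have key: "\<phi> t x - q (\<lambda>i. t * p i + x i - e i) \<le> q (\<lambda>i. t' * p i + x' i + e i) - \<phi> t' x'"
    if "(t,x) \<in> S" "(t',x') \<in> S" for t x t' x'
  proof -
    have "(t+t', \<lambda>i. x i + x' i) \<in> S" using that by (auto simp: S_def)
    then have "\<phi> (t+t') (\<lambda>i. x i + x' i) \<le> q (\<lambda>i. (t+t') * p i + (x i + x' i))" by (rule inv')
    also have "(\<lambda>i. (t+t') * p i + (x i + x' i)) = (\<lambda>i. (t * p i + x i - e i) + (t' * p i + x' i + e i))"
      by (auto simp: algebra_simps)
    also have "q \<dots> \<le> q (\<lambda>i. t * p i + x i - e i) + q (\<lambda>i. t' * p i + x' i + e i)" by (rule sub)
    finally show ?thesis
      by (simp add: \<phi>_def algebra_simps sum.distrib)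
  qed
  define c where "c = Sup ((\<lambda>(t,x). \<phi> t x - q (\<lambda>i. t * p i + x i - e i)) ` S)"
  have S0: "(0, \<lambda>_. 0) \<in> S" by (auto simp: S_def)
  have bdd: "bdd_above ((\<lambda>(t,x). \<phi> t x - q (\<lambda>i. t * p i + x i - e i)) ` S)"
    using key[OF _ S0] by (intro bdd_aboveI[where M = "q (\<lambda>i. 0 * p i + 0 + e i) - \<phi> 0 (\<lambda>_. 0)"]) auto
  have lower: "\<phi> t x - q (\<lambda>i. t * p i + x i - e i) \<le> c" if "(t,x) \<in> S" for t x
    unfolding c_def using that bdd by (intro cSup_upper) (auto intro!: image_eqI[where x="(t,x)"])
  have upper: "c \<le> q (\<lambda>i. t * p i + x i + e i) - \<phi> t x" if "(t,x) \<in> S" for t x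
    unfolding c_def using S0 key[OF _ that] by (intro cSup_least) auto
  show ?thesis
  proof (intro exI allI impI)
    fix t and x' :: "nat \<Rightarrow> real"
    assume x': "\<forall>i\<ge>Suc k. x' i = 0"
    define s where "s = x' k"
    define x where "x = x'(k:=0)"
    have xS: "(t,x) \<in> S" using x' by (auto simp: S_def x_def)
    have sumeq: "(\<Sum>i<Suc k. (a(k:=c)) i * x' i) = (\<Sum>i<k. a i * x i) + c * s"
      by (simp add: s_def x_def)
    have veq: "(\<lambda>i. t * p i + x' i) = (\<lambda>i. t * p i + x i + s * e i)"
      by (auto simp: x_def s_def e_def)
    have A: "\<phi> t x + c * s \<le> q (\<lambda>i. t * p i + x i + s * e i)"
    proof (cases "s = 0")
      case True
      then show ?thesis using inv'[OF xS] by simp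
    next
      case False
      show ?thesis
      proof (cases "s > 0")
        case True
        have zS: "(t/s, \<lambda>i. x i / s) \<in> S" using xS by (auto simp: S_def)
        have "s * c \<le> s * (q (\<lambda>i. t/s * p i + x i / s + e i) - \<phi> (t/s) (\<lambda>i. x i / s))"
          using upper[OF zS] True by (intro mult_left_mono) auto
        also have "\<dots> = q (\<lambda>i. s * (t/s * p i + x i / s + e i)) - s * \<phi> (t/s) (\<lambda>i. x i / s)"
          using hom[OF True, of "\<lambda>i. t/s * p i + x i / s + e i"] by (simp add: right_diff_distrib)
        also have "(\<lambda>i. s * (t/s * p i + x i / s + e i)) = (\<lambda>i. t * p i + x i + s * e i)"
          using True by (auto simp: field_simps)
        also have "s * \<phi> (t/s) (\<lambda>i. x i / s) = \<phi> t x"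
          using True by (simp add: \<phi>_def sum_distrib_left field_simps)
        finally show ?thesis by (simp add: algebra_simps)
      next
        case False2: False
        define r where "r = - s"
        have r: "r > 0" using False False2 by (auto simp: r_def)
        have zS: "(t/r, \<lambda>i. x i / r) \<in> S" using xS by (auto simp: S_def)
        have "r * (\<phi> (t/r) (\<lambda>i. x i / r) - q (\<lambda>i. t/r * p i + x i / r - e i)) \<le> r * c"
          using lower[OF zS] r by (intro mult_left_mono) auto
        also have "r * (\<phi> (t/r) (\<lambda>i. x i / r) - q (\<lambda>i. t/r * p i + x i / r - e i))
           = r * \<phi> (t/r) (\<lambda>i. x i / r) - q (\<lambda>i. r * (t/r * p i + x i / r - e i))"
          using hom[OF r, of "\<lambda>i. t/r * p i + x i / r - e i"] by (simp add: right_diff_distrib)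
        also have "(\<lambda>i. r * (t/r * p i + x i / r - e i)) = (\<lambda>i. t * p i + x i + s * e i)"
          using r by (auto simp: field_simps r_def)
        also have "r * \<phi> (t/r) (\<lambda>i. x i / r) = \<phi> t x"
          using r by (simp add: \<phi>_def sum_distrib_left field_simps)
        finally show ?thesis by (simp add: r_def algebra_simps)
      qed
    qed
    have B: "t*b + (\<Sum>i<Suc k. (a(k:=c)) i * x' i) = \<phi> t x + c * s"
      unfolding sumeq \<phi>_def by simp
    show "t*b + (\<Sum>i<Suc k. (a(k:=c)) i * x' i) \<le> q (\<lambda>i. t * p i + x' i)"
      unfolding veq B by (rule A)
  qed
qed

lemma hb_all:
  fixes q :: "(nat\<Rightarrow>real) \<Rightarrow> real"
  assumes sub: "\<And>u v. q (\<lambda>i. u i + v i) \<le> q u + q v"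
    and hom: "\<And>t u. t > 0 \<Longrightarrow> q (\<lambda>i. t * u i) = t * q u"
    and nn: "\<And>u. q u \<ge> 0"
  shows "\<exists>a. \<forall>t x. (\<forall>i\<ge>n. x i = 0) \<longrightarrow> t * q p + (\<Sum>i<n. a i * x i) \<le> q (\<lambda>i. t * p i + x i)"
proof (induction n)
  case 0
  show ?case
  proof (intro exI allI impI)
    fix t and x :: "nat \<Rightarrow> real" assume "\<forall>i\<ge>0. x i = 0"
    then have x: "x = (\<lambda>_. 0)" by auto
    show "t * q p + (\<Sum>i<0. (\<lambda>_. 0) i * x i) \<le> q (\<lambda>i. t * p i + x i)"
    proof (cases "t > 0")
      case True then show ?thesis using hom[OF True, of p] by (simp add: x)
    next
      case False
      then have "t * q p \<le> 0" using nn[of p] by (simp add: mult_nonpos_nonneg)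
      then show ?thesis using nn by (simp add: order_trans)
    qed
  qed
next
  case (Suc n)
  then obtain a where "\<And>t x. (\<forall>i\<ge>n. x i = 0) \<Longrightarrow> t * q p + (\<Sum>i<n. a i * x i) \<le> q (\<lambda>i. t * p i + x i)"
    by blast
  from hb_step[OF sub hom this] show ?case by blast
qed

definition qd :: "(nat \<Rightarrow> real) set \<Rightarrow> nat \<Rightarrow> (nat \<Rightarrow> real) \<Rightarrow> real" where
  "qd C n x = Inf ((\<lambda>c. \<Sum>i<n. \<bar>x i - c i\<bar>) ` C)"

lemma cone_sep:
  fixes C :: "(nat \<Rightarrow> real) set"
  assumes C0: "(\<lambda>_. 0) \<in> C"
    and Cadd: "\<And>u v. u \<in> C \<Longrightarrow> v \<in> C \<Longrightarrow> (\<lambda>i. u i + v i) \<in> C"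
    and Cscale: "\<And>u t. u \<in> C \<Longrightarrow> t > 0 \<Longrightarrow> (\<lambda>i. t * u i) \<in> C"
    and eps: "\<epsilon> > 0"
    and far: "\<And>c. c \<in> C \<Longrightarrow> \<exists>i<n. \<bar>c i - p i\<bar> \<ge> \<epsilon>"
  shows "\<exists>a. (\<Sum>i<n. a i * p i) > 0 \<and> (\<forall>c\<in>C. (\<Sum>i<n. a i * c i) \<le> 0)"
proof -
  let ?q = "qd C n"
  have ne: "C \<noteq> {}" using C0 by auto
  have bdd: "bdd_below ((\<lambda>c. \<Sum>i<n. \<bar>x i - c i\<bar>) ` C)" for x
    by (rule bdd_belowI[where m=0]) (auto intro: sum_nonneg)
  have nn: "?q x \<ge> 0" for x
    unfolding qd_def using ne by (intro cInf_greatest) (auto intro: sum_nonneg)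
  have le: "?q x \<le> (\<Sum>i<n. \<bar>x i - c i\<bar>)" if "c \<in> C" for x c
    unfolding qd_def using that bdd by (intro cInf_lower) auto
  have sub: "?q (\<lambda>i. u i + v i) \<le> ?q u + ?q v" for u v
  proof -
    have "?q (\<lambda>i. u i + v i) - (\<Sum>i<n. \<bar>v i - c2 i\<bar>) \<le> ?q u" if c2: "c2 \<in> C" for c2
      unfolding qd_def[of C n u] using ne
    proof (intro cInf_greatest)
      fix y assume "y \<in> (\<lambda>c. \<Sum>i<n. \<bar>u i - c i\<bar>) ` C"
      then obtain c1 where c1: "c1 \<in> C" "y = (\<Sum>i<n. \<bar>u i - c1 i\<bar>)" by auto
      have "?q (\<lambda>i. u i + v i) \<le> (\<Sum>i<n. \<bar>(u i + v i) - (c1 i + c2 i)\<bar>)"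
        using le[OF Cadd[OF c1(1) c2]] by simp
      also have "\<dots> \<le> (\<Sum>i<n. \<bar>u i - c1 i\<bar> + \<bar>v i - c2 i\<bar>)"
        by (intro sum_mono) linarith
      finally show "?q (\<lambda>i. u i + v i) - (\<Sum>i<n. \<bar>v i - c2 i\<bar>) \<le> y"
        by (simp add: c1 sum.distrib)
    qed auto
    then have "?q (\<lambda>i. u i + v i) - ?q u \<le> ?q v"
      unfolding qd_def[of C n v] using ne by (intro cInf_greatest) (auto simp: algebra_simps)
    then show ?thesis by simp
  qed
  have homle: "?q (\<lambda>i. t * u i) \<le> t * ?q u" if t: "t > 0" for t u
  proof -
    have "?q (\<lambda>i. t * u i) / t \<le> ?q u"
      unfolding qd_def[of C n u] using ne
    proof (intro cInf_greatest)
      fix y assume "y \<in> (\<lambda>c. \<Sum>i<n. \<bar>u i - c i\<bar>) ` C"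
      then obtain c where c: "c \<in> C" "y = (\<Sum>i<n. \<bar>u i - c i\<bar>)" by auto
      have "?q (\<lambda>i. t * u i) \<le> (\<Sum>i<n. \<bar>t * u i - t * c i\<bar>)"
        using le[OF Cscale[OF c(1) t]] by simp
      also have "\<dots> = t * y"
        using t by (simp add: c sum_distrib_left abs_mult flip: right_diff_distrib)
      finally show "?q (\<lambda>i. t * u i) / t \<le> y" using t by (simp add: field_simps)
    qed auto
    then show ?thesis using t by (simp add: field_simps)
  qed
  have hom: "?q (\<lambda>i. t * u i) = t * ?q u" if t: "t > 0" for t u
  proof -
    have "?q u = ?q (\<lambda>i. (1/t) * (t * u i))" using t by simp
    also have "\<dots> \<le> (1/t) * ?q (\<lambda>i. t * u i)" using t by (intro homle) auto
    finally have "t * ?q u \<le> ?q (\<lambda>i. t * u i)" using t by (simp add: field_simps)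
    with homle[OF t, of u] show ?thesis by simp
  qed
  obtain a where a: "\<And>t x. (\<forall>i\<ge>n. x i = 0) \<Longrightarrow> t * ?q p + (\<Sum>i<n. a i * x i) \<le> ?q (\<lambda>i. t * p i + x i)"
    using hb_all[where q="qd C n" and n=n and p=p, OF sub hom nn] by blast
  have qp: "?q p \<ge> \<epsilon>"
    unfolding qd_def using ne
  proof (intro cInf_greatest)
    fix y assume "y \<in> (\<lambda>c. \<Sum>i<n. \<bar>p i - c i\<bar>) ` C"
    then obtain c where c: "c \<in> C" "y = (\<Sum>i<n. \<bar>p i - c i\<bar>)" by auto
    obtain i where i: "i < n" "\<bar>c i - p i\<bar> \<ge> \<epsilon>" using far[OF c(1)] by auto
    have "\<bar>p i - c i\<bar> \<le> (\<Sum>i<n. \<bar>p i - c i\<bar>)"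
      using i by (intro member_le_sum) auto
    then show "\<epsilon> \<le> y" using i c by (simp add: abs_minus_commute)
  qed auto
  have "1 * ?q p + (\<Sum>i<n. a i * (if i < n then - p i else 0)) \<le> ?q (\<lambda>i. 1 * p i + (if i < n then - p i else 0))"
    by (rule a) auto
  also have "\<dots> \<le> (\<Sum>i<n. \<bar>(1 * p i + (if i < n then - p i else 0)) - 0\<bar>)"
    using le[OF C0, of "\<lambda>i. 1 * p i + (if i < n then - p i else 0)"] by simp
  also have "\<dots> = 0" by simp
  finally have "?q p \<le> (\<Sum>i<n. a i * p i)" by (simp add: sum_negf)
  moreover have "(\<Sum>i<n. a i * c i) \<le> 0" if c: "c \<in> C" for c
  proof -
    have "0 * ?q p + (\<Sum>i<n. a i * (if i < n then c i else 0)) \<le> ?q (\<lambda>i. 0 * p i + (if i < n then c i else 0))"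
      by (rule a) auto
    also have "\<dots> \<le> (\<Sum>i<n. \<bar>(0 * p i + (if i < n then c i else 0)) - c i\<bar>)"
      using le[OF c, of "\<lambda>i. 0 * p i + (if i < n then c i else 0)"] by simp
    also have "\<dots> = 0" by simp
    finally show ?thesis by simp
  qed
  ultimately show ?thesis using qp eps by force
qed



definition madd :: "'a measure \<Rightarrow> 'a measure \<Rightarrow> 'a measure" where
  "madd M N = measure_of (space M) (sets M) (\<lambda>A. emeasure M A + emeasure N A)"

lemma sets_madd[simp]: "sets (madd M N) = sets M" and space_madd[simp]: "space (madd M N) = space M"
  by (auto simp: madd_def)

lemma emeasure_madd:
  assumes sets_eq: "sets N = sets M" and A: "A \<in> sets M"
  shows "emeasure (madd M N) A = emeasure M A + emeasure N A"
  unfolding madd_def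
proof (rule emeasure_measure_of_sigma)
  show "sigma_algebra (space M) (sets M)" ..
  show "positive (sets M) (\<lambda>A. emeasure M A + emeasure N A)"
    by (simp add: positive_def)
  show "countably_additive (sets M) (\<lambda>A. emeasure M A + emeasure N A)"
  proof (rule countably_additiveI)
    fix A :: "nat \<Rightarrow> _"  assume A: "range A \<subseteq> sets M" and "disjoint_family A"
    then have 1: "(\<Sum>i. emeasure M (A i)) = emeasure M (\<Union>i. A i)"
      and 2: "(\<Sum>i. emeasure N (A i)) = emeasure N (\<Union>i. A i)"
      by (simp_all add: suminf_emeasure sets_eq)
    have "(\<Sum>i. emeasure M (A i) + emeasure N (A i)) = (\<Sum>i. emeasure M (A i)) + (\<Sum>i. emeasure N (A i))"
      by (rule suminf_add[symmetric]) auto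
    then show "(\<Sum>i. emeasure M (A i) + emeasure N (A i)) = emeasure M (\<Union>i. A i) + emeasure N (\<Union>i. A i)"
      by (simp only: 1 2)
  qed
qed fact

lemma nn_integral_split:
  assumes s1: "sets M1 = sets M" and s2: "sets M2 = sets M"
    and em: "\<And>A. A \<in> sets M \<Longrightarrow> emeasure M A = emeasure M1 A + emeasure M2 A"
    and f: "f \<in> borel_measurable M"
  shows "(\<integral>\<^sup>+x. f x \<partial>M) = (\<integral>\<^sup>+x. f x \<partial>M1) + (\<integral>\<^sup>+x. f x \<partial>M2)"
proof -
  have sp1: "space M1 = space M" and sp2: "space M2 = space M"
    using s1 s2 sets_eq_imp_space_eq by blast+
  have meq1: "measurable M1 N = measurable M N" for N :: "ennreal measure"
    by (rule measurable_cong_sets) (auto simp: s1)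
  have meq2: "measurable M2 N = measurable M N" for N :: "ennreal measure"
    by (rule measurable_cong_sets) (auto simp: s2)
  show ?thesis
  using f
  proof (induction f rule: borel_measurable_induct)
    case (cong f g)
    have "(\<integral>\<^sup>+x. f x \<partial>N) = (\<integral>\<^sup>+x. g x \<partial>N)" if "space N = space M" for N
      using cong(3) that by (intro nn_integral_cong) auto
    then show ?case using cong(4) sp1 sp2 by simp
  next
    case (set A)
    then show ?case using em[OF set] by (simp add: s1 s2)
  next
    case (mult u c)
    have "(\<integral>\<^sup>+x. c * u x \<partial>N) = c * (\<integral>\<^sup>+x. u x \<partial>N)" if "u \<in> borel_measurable N" for N
      using that by (rule nn_integral_cmult)
    then show ?case using mult(2,4) meq1 meq2 by (simp add: distrib_left)
  next
    case (add u v)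
    have "(\<integral>\<^sup>+x. v x + u x \<partial>N) = (\<integral>\<^sup>+x. v x \<partial>N) + (\<integral>\<^sup>+x. u x \<partial>N)"
      if "u \<in> borel_measurable N" "v \<in> borel_measurable N" for N
      using that by (intro nn_integral_add) auto
    moreover have "u \<in> borel_measurable M1" "v \<in> borel_measurable M1" "u \<in> borel_measurable M2" "v \<in> borel_measurable M2"
      using add.hyps meq1 meq2 by auto
    ultimately show ?case using add.hyps add.IH by (simp add: algebra_simps)
  next
    case (seq U)
    have SUPf: "(\<Squnion> range U) = (\<lambda>x. SUP i. U i x)" by (rule ext) (simp only: SUP_apply)
    have inc: "incseq (\<lambda>i. \<integral>\<^sup>+x. U i x \<partial>N)" for N
      using \<open>incseq U\<close> unfolding incseq_def le_fun_def by (auto intro!: nn_integral_mono)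
    have mc: "(\<integral>\<^sup>+x. (\<Squnion> range U) x \<partial>N) = (SUP i. \<integral>\<^sup>+x. U i x \<partial>N)"
      if "\<And>i. U i \<in> borel_measurable N" for N
      unfolding SUPf by (rule nn_integral_monotone_convergence_SUP[OF \<open>incseq U\<close> that])
    have m1: "U i \<in> borel_measurable M1" "U i \<in> borel_measurable M2" "U i \<in> borel_measurable M" for i
      using seq.hyps(1)[of i] meq1 meq2 by auto
    have "(SUP i. \<integral>\<^sup>+x. U i x \<partial>M) = (SUP i. (\<integral>\<^sup>+x. U i x \<partial>M1) + (\<integral>\<^sup>+x. U i x \<partial>M2))"
      using seq.IH by (simp only:)
    also have "\<dots> = (SUP i. \<integral>\<^sup>+x. U i x \<partial>M1) + (SUP i. \<integral>\<^sup>+x. U i x \<partial>M2)"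
      by (rule ennreal_SUP_add[OF inc inc])
    finally show ?case unfolding mc[OF m1(1)] mc[OF m1(2)] mc[OF m1(3)] .
  qed
qed
lemma integral_split:
  fixes f :: "'a \<Rightarrow> real"
  assumes s1: "sets M1 = sets M" and s2: "sets M2 = sets M"
    and em: "\<And>A. A \<in> sets M \<Longrightarrow> emeasure M A = emeasure M1 A + emeasure M2 A"
    and fin1: "finite_measure M1" and fin2: "finite_measure M2"
    and f: "f \<in> borel_measurable M" and B: "\<And>x. \<bar>f x\<bar> \<le> B"
  shows "integral\<^sup>L M f = integral\<^sup>L M1 f + integral\<^sup>L M2 f"
proof -
  have sp1: "space M1 = space M" and sp2: "space M2 = space M"
    using s1 s2 sets_eq_imp_space_eq by blast+
  have fin: "finite_measure M"
  proof (rule finite_measureI)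
    have "emeasure M (space M) = emeasure M1 (space M1) + emeasure M2 (space M2)"
      using em[of "space M"] sp1 sp2 by simp
    then show "emeasure M (space M) \<noteq> \<infinity>"
      using finite_measure.emeasure_finite[OF fin1] finite_measure.emeasure_finite[OF fin2] by simp
  qed
  have meq1: "measurable M1 N = measurable M N" for N :: "real measure"
    by (rule measurable_cong_sets) (auto simp: s1)
  have meq2: "measurable M2 N = measurable M N" for N :: "real measure"
    by (rule measurable_cong_sets) (auto simp: s2)
  have B0: "B \<ge> 0" using B[of undefined] abs_ge_zero[of "f undefined"] by linarith
  have key: "integral\<^sup>L M h = integral\<^sup>L M1 h + integral\<^sup>L M2 h"
    if h: "h \<in> borel_measurable M" "\<And>x. 0 \<le> h x" "\<And>x. h x \<le> C" for h :: "'a \<Rightarrow> real" and C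
  proof -
    have hm: "h \<in> borel_measurable M1" "h \<in> borel_measurable M2" using h meq1 meq2 by auto
    have int: "integrable N h" if "finite_measure N" "h \<in> borel_measurable N" for N
      using that h by (intro finite_measure.integrable_const_bound[where B=C]) auto
    have "ennreal (integral\<^sup>L M h) = (\<integral>\<^sup>+x. ennreal (h x) \<partial>M)"
      using int[OF fin h(1)] h by (intro nn_integral_eq_integral[symmetric]) auto
    also have "\<dots> = (\<integral>\<^sup>+x. ennreal (h x) \<partial>M1) + (\<integral>\<^sup>+x. ennreal (h x) \<partial>M2)"
      using h by (intro nn_integral_split[OF s1 s2 em]) auto
    also have "(\<integral>\<^sup>+x. ennreal (h x) \<partial>M1) = ennreal (integral\<^sup>L M1 h)"
      using int[OF fin1 hm(1)] h by (intro nn_integral_eq_integral) auto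
    also have "(\<integral>\<^sup>+x. ennreal (h x) \<partial>M2) = ennreal (integral\<^sup>L M2 h)"
      using int[OF fin2 hm(2)] h by (intro nn_integral_eq_integral) auto
    also have "ennreal (integral\<^sup>L M1 h) + ennreal (integral\<^sup>L M2 h) = ennreal (integral\<^sup>L M1 h + integral\<^sup>L M2 h)"
      using h by (intro ennreal_plus[symmetric] integral_nonneg) auto
    finally show ?thesis
      using h by (subst (asm) ennreal_inj) (auto intro!: integral_nonneg add_nonneg_nonneg)
  qed
  have int: "integrable N f" "integrable N (\<lambda>x. f x + B)" "integrable N (\<lambda>x. B)"
    if "finite_measure N" "f \<in> borel_measurable N" for N
  proof -
    show "integrable N f" using that B by (intro finite_measure.integrable_const_bound[where B=B]) auto
    have nb: "norm (f x + B) \<le> 2*B" for x using B[of x] B0 by (simp add: abs_le_iff)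
    show "integrable N (\<lambda>x. f x + B)" using that nb
      by (intro finite_measure.integrable_const_bound[where B="2*B"]) auto
    show "integrable N (\<lambda>x. B)" using that B0
      by (intro finite_measure.integrable_const_bound[where B=B]) auto
  qed
  have fm: "f \<in> borel_measurable M1" "f \<in> borel_measurable M2" using f meq1 meq2 by auto
  have e1: "integral\<^sup>L N f = integral\<^sup>L N (\<lambda>x. f x + B) - integral\<^sup>L N (\<lambda>x. B)"
    if "finite_measure N" "f \<in> borel_measurable N" for N
    using int[OF that] by (simp add: integral_add)
  have k1: "integral\<^sup>L M (\<lambda>x. f x + B) = integral\<^sup>L M1 (\<lambda>x. f x + B) + integral\<^sup>L M2 (\<lambda>x. f x + B)"
    using f B by (intro key[where C="2*B"]) (auto simp: abs_le_iff, smt (verit) B)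
  have k2: "integral\<^sup>L M (\<lambda>x. B) = integral\<^sup>L M1 (\<lambda>x. B) + integral\<^sup>L M2 (\<lambda>x. B)"
    using B0 by (intro key[where C="B"]) auto
  show ?thesis
    using e1[OF fin f] e1[OF fin1 fm(1)] e1[OF fin2 fm(2)] k1 k2 by simp
qed

definition scm :: "real \<Rightarrow> 'a measure \<Rightarrow> 'a measure" where
  "scm r M = density M (\<lambda>_. ennreal r)"

lemma fin_borel_scm: "fin_borel M \<Longrightarrow> fin_borel (scm r M)"
  unfolding fin_borel_def scm_def
  by (auto intro!: finite_measureI simp: emeasure_density_const finite_measure.emeasure_finite ennreal_mult_eq_top_iff)

lemma integral_scm:
  fixes f :: "'a::topological_space \<Rightarrow> real"
  assumes "fin_borel M" "r \<ge> 0" "f \<in> borel_measurable borel"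
  shows "integral\<^sup>L (scm r M) f = r * integral\<^sup>L M f"
proof -
  have "sets M = sets borel" using assms(1) unfolding fin_borel_def by simp
  then have "f \<in> borel_measurable M" using assms(3) measurable_cong_sets[of M borel borel borel] by simp
  then show ?thesis unfolding scm_def using assms(2)
    by (subst integral_density) auto
qed

lemma fin_borel_madd: "fin_borel M \<Longrightarrow> fin_borel N \<Longrightarrow> fin_borel (madd M N)"
  unfolding fin_borel_def
proof (intro conjI finite_measureI, simp)
  assume a: "sets M = sets borel \<and> finite_measure M" "sets N = sets borel \<and> finite_measure N"
  then have "emeasure (madd M N) (space (madd M N)) = emeasure M (space M) + emeasure N (space M)"
    by (simp, intro emeasure_madd) auto
  also have "space M = space N" using a by (metis sets_eq_imp_space_eq)
  finally show "emeasure (madd M N) (space (madd M N)) \<noteq> \<infinity>"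
    using a by (simp add: finite_measure.emeasure_finite)
qed

lemma integral_madd:
  fixes f :: "'a::topological_space \<Rightarrow> real"
  assumes "fin_borel M" "fin_borel N" "f \<in> borel_measurable borel" "\<And>x. \<bar>f x\<bar> \<le> B"
  shows "integral\<^sup>L (madd M N) f = integral\<^sup>L M f + integral\<^sup>L N f"
proof (rule integral_split[where B=B])
  show "sets M = sets (madd M N)" by simp
  show "sets N = sets (madd M N)" using assms(1,2) unfolding fin_borel_def by simp
  show "emeasure (madd M N) A = emeasure M A + emeasure N A" if "A \<in> sets (madd M N)" for A
    using that assms(1,2) unfolding fin_borel_def by (intro emeasure_madd) auto
  show "finite_measure M" "finite_measure N" using assms(1,2) unfolding fin_borel_def by auto
  have "sets (madd M N) = sets borel" using assms(1) unfolding fin_borel_def by simp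
  then have eq: "borel_measurable (madd M N) = borel_measurable borel"
    by (intro measurable_cong_sets) auto
  show "f \<in> borel_measurable (madd M N)" by (subst eq) (rule assms(3))
qed (use assms(4) in auto)


fun posm :: "(nat \<Rightarrow> 'a measure \<times> 'a measure) \<Rightarrow> (nat \<Rightarrow> real) \<Rightarrow> nat \<Rightarrow> 'a::topological_space measure" where
  "posm \<phi> a 0 = null_measure borel"
| "posm \<phi> a (Suc k) = madd (posm \<phi> a k) (scm \<bar>a k\<bar> (if a k \<ge> 0 then fst (\<phi> k) else snd (\<phi> k)))"

fun negm :: "(nat \<Rightarrow> 'a measure \<times> 'a measure) \<Rightarrow> (nat \<Rightarrow> real) \<Rightarrow> nat \<Rightarrow> 'a::topological_space measure" where
  "negm \<phi> a 0 = null_measure borel"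
| "negm \<phi> a (Suc k) = madd (negm \<phi> a k) (scm \<bar>a k\<bar> (if a k \<ge> 0 then snd (\<phi> k) else fst (\<phi> k)))"

lemma combo:
  fixes \<phi> :: "nat \<Rightarrow> 'a::topological_space measure \<times> 'a measure"
  assumes "\<forall>i<n. \<phi> i \<in> ca"
  shows "fin_borel (posm \<phi> a n) \<and> fin_borel (negm \<phi> a n) \<and>
    (\<forall>f B. f \<in> borel_measurable borel \<longrightarrow> (\<forall>x. \<bar>f x\<bar> \<le> B) \<longrightarrow>
       integral\<^sup>L (posm \<phi> a n) f - integral\<^sup>L (negm \<phi> a n) f = (\<Sum>i<n. a i * pairing (\<phi> i) f))"
  using assms
proof (induction n)
  case 0
  have "fin_borel (null_measure (borel :: 'a measure))"
    unfolding fin_borel_def by (auto intro!: finite_measureI)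
  then show ?case by simp
next
  case (Suc n)
  then have IH: "fin_borel (posm \<phi> a n)" "fin_borel (negm \<phi> a n)"
    "\<And>f B. f \<in> borel_measurable borel \<Longrightarrow> (\<forall>x. \<bar>f x\<bar> \<le> B) \<Longrightarrow>
       integral\<^sup>L (posm \<phi> a n) f - integral\<^sup>L (negm \<phi> a n) f = (\<Sum>i<n. a i * pairing (\<phi> i) f)"
    by auto
  have ca: "fin_borel (fst (\<phi> n))" "fin_borel (snd (\<phi> n))" using Suc.prems by (auto simp: ca_def)
  let ?P = "scm \<bar>a n\<bar> (if a n \<ge> 0 then fst (\<phi> n) else snd (\<phi> n))"
  let ?N = "scm \<bar>a n\<bar> (if a n \<ge> 0 then snd (\<phi> n) else fst (\<phi> n))"
  have fP: "fin_borel ?P" and fN: "fin_borel ?N" using ca by (auto intro: fin_borel_scm)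
  show ?case
  proof (intro conjI allI impI)
    show "fin_borel (posm \<phi> a (Suc n))" using IH fP by (simp add: fin_borel_madd)
    show "fin_borel (negm \<phi> a (Suc n))" using IH fN by (simp add: fin_borel_madd)
    fix f :: "'a \<Rightarrow> real" and B assume f: "f \<in> borel_measurable borel" "\<forall>x. \<bar>f x\<bar> \<le> B"
    have "integral\<^sup>L (posm \<phi> a (Suc n)) f - integral\<^sup>L (negm \<phi> a (Suc n)) f
       = (integral\<^sup>L (posm \<phi> a n) f - integral\<^sup>L (negm \<phi> a n) f) + (integral\<^sup>L ?P f - integral\<^sup>L ?N f)"
      using f IH fP fN by (simp add: integral_madd[where B=B])
    also have "integral\<^sup>L ?P f - integral\<^sup>L ?N f = a n * pairing (\<phi> n) f"
      using ca f by (auto simp: integral_scm pairing_def algebra_simps)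
    finally show "integral\<^sup>L (posm \<phi> a (Suc n)) f - integral\<^sup>L (negm \<phi> a (Suc n)) f = (\<Sum>i<Suc n. a i * pairing (\<phi> i) f)"
      using IH(3)[OF f(1) f(2)] by simp
  qed
qed


lemma closed_approx_lim:
  fixes M :: "'a::metric_space measure" and F :: "'a set"
  assumes fin: "fin_borel M" and F: "closed F" "F \<noteq> {}"
  shows "(\<lambda>k. integral\<^sup>L M (\<lambda>x. max 0 (1 - real (Suc k) * infdist x F))) \<longlonglongrightarrow> measure M F"
proof -
  have sM: "sets M = sets borel" and fm: "finite_measure M" using fin by (auto simp: fin_borel_def)
  have meq: "borel_measurable M = borel_measurable borel" by (intro measurable_cong_sets) (auto simp: sM)
  have cont: "continuous_on UNIV (\<lambda>x. max 0 (1 - real (Suc k) * infdist x F))" for k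
    by (intro continuous_intros)
  have "(\<lambda>k. integral\<^sup>L M (\<lambda>x. max 0 (1 - real (Suc k) * infdist x F))) \<longlonglongrightarrow> integral\<^sup>L M (indicator F :: 'a \<Rightarrow> real)"
  proof (rule integral_dominated_convergence[where w="\<lambda>_. 1"])
    show "(indicator F :: 'a \<Rightarrow> real) \<in> borel_measurable M"
      unfolding meq using F(1) by (intro borel_measurable_indicator) (simp add: borel_closed)
    show "(\<lambda>x. max 0 (1 - real (Suc k) * infdist x F)) \<in> borel_measurable M" for k
      unfolding meq using cont[of k] by (simp add: borel_measurable_continuous_onI)
    show "integrable M (\<lambda>_. 1::real)" using fm by (simp add: finite_measure.integrable_const)
    show "AE x in M. norm (max 0 (1 - real (Suc k) * infdist x F)) \<le> 1" for k
      by (intro AE_I2) (auto simp: infdist_nonneg)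
    show "AE x in M. (\<lambda>k. max 0 (1 - real (Suc k) * infdist x F)) \<longlonglongrightarrow> indicator F x"
    proof (intro AE_I2)
      fix x
      show "(\<lambda>k. max 0 (1 - real (Suc k) * infdist x F)) \<longlonglongrightarrow> indicator F x"
      proof (cases "x \<in> F")
        case True
        then have "infdist x F = 0" using in_closed_iff_infdist_zero[OF F] by simp
        then show ?thesis using True by simp
      next
        case False
        then have d: "infdist x F > 0" using in_closed_iff_infdist_zero[OF F] infdist_nonneg[of x F] by auto
        obtain N :: nat where N: "1 / infdist x F < N" using reals_Archimedean2 by blast
        have "eventually (\<lambda>k. max 0 (1 - real (Suc k) * infdist x F) = 0) sequentially"
          unfolding eventually_sequentially
        proof (intro exI allI impI)
          fix k assume "N \<le> k"
          then have "1 / infdist x F < real (Suc k)" using N by linarith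
          then have "1 < real (Suc k) * infdist x F" using d by (simp add: field_simps)
          then show "max 0 (1 - real (Suc k) * infdist x F) = 0" by simp
        qed
        then show ?thesis using False by (simp add: tendsto_eventually)
      qed
    qed
  qed
  also have "integral\<^sup>L M (indicator F :: 'a \<Rightarrow> real) = measure M F"
    using sets_eq_imp_space_eq[OF sM] by (simp add: integral_indicator)
  finally show ?thesis .
qed

lemma inner_closed:
  fixes M :: "'a::metric_space measure"
  assumes fin: "fin_borel M" and A: "A \<in> sets borel" and e: "e > 0"
  shows "\<exists>F. closed F \<and> F \<subseteq> A \<and> measure M A \<le> measure M F + e"
proof -
  have sM: "sets M = sets borel" and fm: "finite_measure M" using fin by (auto simp: fin_borel_def)
  have spM: "space M = UNIV" using sets_eq_imp_space_eq[OF sM] by simp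
  have bs: "S \<in> sets M" if "S \<in> sets borel" for S using that sM by simp
  have mono: "measure M S \<le> measure M T" if "S \<subseteq> T" "T \<in> sets borel" for S T
    using that by (intro finite_measure.finite_measure_mono[OF fm]) (auto simp: sM)
  define R where "R A \<longleftrightarrow> (\<forall>e>0. \<exists>F U. closed F \<and> open U \<and> F \<subseteq> A \<and> A \<subseteq> U \<and> measure M U \<le> measure M F + e)" for A
  have sb: "sets borel = sigma_sets (UNIV::'a set) (Collect closed)"
    by (subst borel_eq_closed) (simp add: sets_measure_of)
  have Ist: "Int_stable (Collect closed :: 'a set set)" by (auto simp: Int_stable_def)
  have Pw: "Collect closed \<subseteq> Pow (UNIV :: 'a set)" by simp
  have "R A" using A unfolding sb
  proof (rule sigma_sets_induct_disjoint[OF Ist Pw])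
    fix A :: "'a set" assume "A \<in> Collect closed"
    then have cA: "closed A" by simp
    show "R A" unfolding R_def
    proof (intro allI impI)
      fix e :: real assume e: "e > 0"
      show "\<exists>F U. closed F \<and> open U \<and> F \<subseteq> A \<and> A \<subseteq> U \<and> measure M U \<le> measure M F + e"
      proof (cases "A = {}")
        case True then show ?thesis using e by (intro exI[of _ "{}"]) auto
      next
        case False
        define U where "U k = {x. infdist x A < 1 / real (Suc k)}" for k
        have oU: "open (U k)" for k unfolding U_def
          by (intro open_Collect_less continuous_intros)
        have dec: "decseq U"
          unfolding decseq_def U_def by (auto simp: frac_le less_le_trans)
        have AU: "A \<subseteq> U k" for k
          unfolding U_def using in_closed_iff_infdist_zero[OF cA False] by auto
        have IU: "(\<Inter>k. U k) = A"
        proof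
          show "(\<Inter>k. U k) \<subseteq> A"
          proof
            fix x assume x: "x \<in> (\<Inter>k. U k)"
            have "infdist x A \<le> 0"
            proof (rule field_le_epsilon)
              fix d :: real assume d: "d > 0"
              obtain k :: nat where "1 / d < k" using reals_Archimedean2 by blast
              then have "1 / real (Suc k) < d" using d by (simp add: field_simps)
              moreover have "infdist x A < 1 / real (Suc k)" using x by (auto simp: U_def)
              ultimately show "infdist x A \<le> 0 + d" by simp
            qed
            then show "x \<in> A" using in_closed_iff_infdist_zero[OF cA False] infdist_nonneg[of x A] by simp
          qed
        qed (use AU in auto)
        have "(\<lambda>k. measure M (U k)) \<longlonglongrightarrow> measure M (\<Inter>k. U k)"
          using oU dec by (intro finite_measure.finite_Lim_measure_decseq[OF fm]) (auto simp: sM)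
        then have "(\<lambda>k. measure M (U k)) \<longlonglongrightarrow> measure M A" by (simp add: IU)
        then have "eventually (\<lambda>k. measure M (U k) < measure M A + e) sequentially"
          using e by (intro order_tendstoD(2)) auto
        then obtain k where "measure M (U k) < measure M A + e" by (auto simp: eventually_sequentially)
        then show ?thesis using oU[of k] AU[of k] cA by (intro exI[of _ A] exI[of _ "U k"]) auto
      qed
    qed
  next
    show "R {}" unfolding R_def by (intro allI impI exI[of _ "{}"]) auto
  next
    fix A :: "'a set" assume "A \<in> sigma_sets UNIV (Collect closed)" and RA: "R A"
    show "R (UNIV - A)" unfolding R_def
    proof (intro allI impI)
      fix e :: real assume "e > 0"
      from RA[unfolded R_def, rule_format, OF this] obtain F U where
        FU: "closed F" "open U" "F \<subseteq> A" "A \<subseteq> U" "measure M U \<le> measure M F + e"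
        by blast
      have "measure M (UNIV - F) = measure M UNIV - measure M F"
        using finite_measure.finite_measure_compl[OF fm, of F] FU(1) by (simp add: spM sM)
      moreover have "measure M (UNIV - U) = measure M UNIV - measure M U"
        using finite_measure.finite_measure_compl[OF fm, of U] FU(2) by (simp add: spM sM)
      ultimately show "\<exists>F' U'. closed F' \<and> open U' \<and> F' \<subseteq> UNIV - A \<and> UNIV - A \<subseteq> U' \<and> measure M U' \<le> measure M F' + e"
        using FU by (intro exI[of _ "UNIV - U"] exI[of _ "UNIV - F"]) auto
    qed
  next
    fix A :: "nat \<Rightarrow> 'a set"
    assume disj: "disjoint_family A" and Ar: "range A \<subseteq> sigma_sets UNIV (Collect closed)"
      and RA: "\<And>i. R (A i)"
    have Ab: "A i \<in> sets M" for i using Ar sb sM by auto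
    show "R (\<Union>(range A))" unfolding R_def
    proof (intro allI impI)
      fix e :: real assume e: "e > 0"
      define \<delta> where "\<delta> i = e / 8 * (1/2) ^ i" for i :: nat
      have \<delta>pos: "\<delta> i > 0" for i using e by (simp add: \<delta>_def)
      have \<delta>sum: "summable \<delta>" unfolding \<delta>_def by (intro summable_mult summable_geometric) simp
      have \<delta>val: "(\<Sum>i. \<delta> i) = e / 4" unfolding \<delta>_def
        by (subst suminf_mult) (auto simp: suminf_geometric)
      have "\<forall>i. \<exists>F U. closed F \<and> open U \<and> F \<subseteq> A i \<and> A i \<subseteq> U \<and> measure M U \<le> measure M F + \<delta> i"
        using RA \<delta>pos unfolding R_def by blast
      then obtain F U where FU: "\<And>i. closed (F i)" "\<And>i. open (U i)" "\<And>i. F i \<subseteq> A i" "\<And>i. A i \<subseteq> U i"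
        "\<And>i. measure M (U i) \<le> measure M (F i) + \<delta> i"
        by metis
      have Fb: "F i \<in> sets M" "U i \<in> sets M" for i using FU(1,2) sM by auto
      define D where "D = (\<Union>i. U i - F i)"
      have Db: "D \<in> sets M" unfolding D_def using Fb by auto
      have mD: "measure M (U i - F i) \<le> \<delta> i" for i
        using finite_measure.finite_measure_Diff[OF fm Fb(2) Fb(1)] FU(3,4)[of i] FU(5)[of i] by auto
      have "measure M D \<le> (\<Sum>i. measure M (U i - F i))"
        unfolding D_def using Fb mD \<delta>sum
        by (intro finite_measure.finite_measure_subadditive_countably[OF fm])
           (auto intro: summable_comparison_test[where g=\<delta>])
      also have "\<dots> \<le> (\<Sum>i. \<delta> i)"
        using mD \<delta>sum by (intro suminf_le) (auto intro: summable_comparison_test[where g=\<delta>])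
      finally have mDe: "measure M D \<le> e / 4" using \<delta>val by simp
      define A' where "A' = (\<Union>(range A))"
      have A'b: "A' \<in> sets M" unfolding A'_def using Ab by auto
      have "(\<lambda>n. measure M (\<Union>i\<in>{..<n}. A i)) \<longlonglongrightarrow> measure M (\<Union>n. \<Union>i\<in>{..<n}. A i)"
        using Ab by (intro finite_measure.finite_Lim_measure_incseq[OF fm])
          (force simp: incseq_def)+
      also have "(\<Union>n. \<Union>i\<in>{..<n}. A i) = A'" unfolding A'_def by auto
      finally have "eventually (\<lambda>n. measure M A' - e/4 < measure M (\<Union>i\<in>{..<n}. A i)) sequentially"
        using e by (intro order_tendstoD(1)) auto
      then obtain N where N: "measure M A' - e/4 < measure M (\<Union>i\<in>{..<N}. A i)"
        by (auto simp: eventually_sequentially)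
      define F' where "F' = (\<Union>i\<in>{..<N}. F i)"
      have cF': "closed F'" unfolding F'_def using FU(1) by (intro closed_UN) auto
      have F'b: "F' \<in> sets M" using cF' sM by auto
      have "(\<Union>i\<in>{..<N}. A i) \<subseteq> F' \<union> D" unfolding F'_def D_def using FU(4) by blast
      then have "measure M (\<Union>i\<in>{..<N}. A i) \<le> measure M (F' \<union> D)"
        using F'b Db by (intro mono) (auto simp: sM)
      also have "\<dots> \<le> measure M F' + measure M D"
        using F'b Db by (intro measure_Un_le) auto
      finally have mA': "measure M A' < measure M F' + e/2" using N mDe by simp
      define U' where "U' = (\<Union>i. U i)"
      have oU': "open U'" unfolding U'_def using FU(2) by auto
      have "U' \<subseteq> A' \<union> D" unfolding U'_def A'_def D_def using FU(3) by blast
      then have "measure M U' \<le> measure M (A' \<union> D)"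
        using A'b Db by (intro mono) (auto simp: sM)
      also have "\<dots> \<le> measure M A' + measure M D"
        using A'b Db by (intro measure_Un_le) auto
      finally have "measure M U' \<le> measure M F' + e" using mA' mDe e by linarith
      moreover have "F' \<subseteq> \<Union>(range A)" unfolding F'_def using FU(3) by blast
      moreover have "\<Union>(range A) \<subseteq> U'" unfolding U'_def using FU(4) by blast
      ultimately show "\<exists>F U. closed F \<and> open U \<and> F \<subseteq> \<Union>(range A) \<and> \<Union>(range A) \<subseteq> U \<and> measure M U \<le> measure M F + e"
        using cF' oU' by blast
    qed
  qed
  from this[unfolded R_def, rule_format, OF e] obtain F U where
    FU: "closed F" "open U" "F \<subseteq> A" "A \<subseteq> U" "measure M U \<le> measure M F + e"
    by blast
  have "measure M A \<le> measure M U" using FU(2,4) by (intro mono) auto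
  then show ?thesis using FU by (intro exI[of _ F]) auto
qed


lemma pos_measure:
  fixes Mp Mn :: "'a::metric_space measure"
  assumes fp: "fin_borel Mp" and fn: "fin_borel Mn"
    and pos: "\<And>f::'a \<Rightarrow> real. continuous_on UNIV f \<Longrightarrow> (\<And>x. 0 \<le> f x) \<Longrightarrow> (\<And>x. f x \<le> 1) \<Longrightarrow>
       integral\<^sup>L Mn f \<le> integral\<^sup>L Mp f"
    and A: "A \<in> sets borel"
  shows "measure Mn A \<le> measure Mp A"
proof -
  have closed_le: "measure Mn F \<le> measure Mp F" if F: "closed F" for F
  proof (cases "F = {}")
    case True then show ?thesis by simp
  next
    case False
    show ?thesis
    proof (rule LIMSEQ_le[OF closed_approx_lim[OF fn F False] closed_approx_lim[OF fp F False]])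
      show "\<exists>N. \<forall>n\<ge>N. integral\<^sup>L Mn (\<lambda>x. max 0 (1 - real (Suc n) * infdist x F))
                   \<le> integral\<^sup>L Mp (\<lambda>x. max 0 (1 - real (Suc n) * infdist x F))"
      proof (intro exI[of _ 0] allI impI)
        fix n :: nat
        show "integral\<^sup>L Mn (\<lambda>x. max 0 (1 - real (Suc n) * infdist x F))
                   \<le> integral\<^sup>L Mp (\<lambda>x. max 0 (1 - real (Suc n) * infdist x F))"
          by (rule pos) (auto intro!: continuous_intros simp: infdist_nonneg)
      qed
    qed
  qed
  have sp: "sets Mp = sets borel" "finite_measure Mp" using fp by (auto simp: fin_borel_def)
  show ?thesis
  proof (rule field_le_epsilon)
    fix e :: real assume "e > 0"
    from inner_closed[OF fn A this] obtain F where F: "closed F" "F \<subseteq> A" "measure Mn A \<le> measure Mn F + e"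
      by blast
    have "measure Mp F \<le> measure Mp A"
      using F(2) A sp by (intro finite_measure.finite_measure_mono[OF sp(2)]) auto
    then show "measure Mn A \<le> measure Mp A + e" using F(3) closed_le[OF F(1)] by linarith
  qed
qed



lemma cfun_bm: "f \<in> Cfun \<Longrightarrow> f \<in> borel_measurable borel"
  unfolding Cfun_def by (auto intro: borel_measurable_continuous_onI)

lemma cfun_bdd:
  fixes f :: "'a::metric_space \<Rightarrow> real"
  assumes "compact (UNIV :: 'a set)" "f \<in> Cfun"
  shows "\<exists>B. \<forall>x. \<bar>f x\<bar> \<le> B"
proof -
  have "compact (f ` UNIV)" using assms unfolding Cfun_def by (intro compact_continuous_image) auto
  then have "bounded (f ` UNIV)" by (rule compact_imp_bounded)
  then show ?thesis unfolding bounded_real by auto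
qed

lemma fb_meas: "fin_borel M \<Longrightarrow> f \<in> borel_measurable borel \<Longrightarrow> f \<in> borel_measurable M"
proof -
  assume "fin_borel M" "f \<in> borel_measurable borel"
  moreover have "sets M = sets borel" using \<open>fin_borel M\<close> by (simp add: fin_borel_def)
  then have "borel_measurable M = (borel_measurable borel :: ('a \<Rightarrow> 'b) set)" by (intro measurable_cong_sets) auto
  ultimately show ?thesis by simp
qed

lemma fb_integrable:
  fixes f :: "'a::topological_space \<Rightarrow> real"
  assumes "fin_borel M" "f \<in> borel_measurable borel" "\<And>x. \<bar>f x\<bar> \<le> B"
  shows "integrable M f"
  using assms fb_meas[OF assms(1,2)] unfolding fin_borel_def
  by (intro finite_measure.integrable_const_bound[where B=B]) auto

lemma pairing_add:
  fixes f h :: "'a::metric_space \<Rightarrow> real"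
  assumes "compact (UNIV :: 'a set)" "\<phi> \<in> ca" "f \<in> Cfun" "h \<in> Cfun"
  shows "pairing \<phi> (\<lambda>x. f x + h x) = pairing \<phi> f + pairing \<phi> h"
proof -
  obtain B1 B2 where B: "\<And>x. \<bar>f x\<bar> \<le> B1" "\<And>x. \<bar>h x\<bar> \<le> B2" using cfun_bdd assms by metis
  have fb: "fin_borel (fst \<phi>)" "fin_borel (snd \<phi>)" using assms(2) by (auto simp: ca_def)
  have "integrable (fst \<phi>) f" "integrable (fst \<phi>) h" "integrable (snd \<phi>) f" "integrable (snd \<phi>) h"
    using fb B cfun_bm assms(3,4) by (auto intro: fb_integrable)
  then show ?thesis unfolding pairing_def by simp
qed

lemma pairing_scale: "pairing \<phi> (\<lambda>x. t * f x) = t * pairing \<phi> f"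
  unfolding pairing_def by (simp add: right_diff_distrib)

lemma expect_add:
  fixes f h :: "'a::metric_space \<Rightarrow> real"
  assumes "compact (UNIV :: 'a set)" "P \<in> Prob" "f \<in> Cfun" "h \<in> Cfun"
  shows "expect P (\<lambda>x. f x + h x) = expect P f + expect P h"
proof -
  obtain B1 B2 where B: "\<And>x. \<bar>f x\<bar> \<le> B1" "\<And>x. \<bar>h x\<bar> \<le> B2" using cfun_bdd assms by metis
  have fb: "fin_borel P" using assms(2) by (auto simp: Prob_def fin_borel_def prob_space_def)
  have "integrable P f" "integrable P h"
    using fb B cfun_bm assms(3,4) by (auto intro: fb_integrable)
  then show ?thesis unfolding expect_def by simp
qed

lemma expect_scale: "expect P (\<lambda>x. t * f x) = t * expect P f"
  unfolding expect_def by simp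

lemma pairing_minus: "pairing \<phi> (\<lambda>x. - f x) = - pairing \<phi> f"
  unfolding pairing_def by simp

lemma sep_prob:
  fixes K :: "('a::metric_space \<Rightarrow> real) set" and g :: "'a \<Rightarrow> real"
  assumes cpt: "compact (UNIV::'a set)"
    and KC: "K \<subseteq> Cfun"
    and K0: "(\<lambda>_. 0) \<in> K"
    and Kadd: "\<And>u v. u \<in> K \<Longrightarrow> v \<in> K \<Longrightarrow> (\<lambda>x. u x + v x) \<in> K"
    and Kscale: "\<And>u t. u \<in> K \<Longrightarrow> t > 0 \<Longrightarrow> (\<lambda>x. t * u x) \<in> K"
    and Kneg: "\<And>f. f \<in> Cfun \<Longrightarrow> (\<forall>x. f x \<le> 0) \<Longrightarrow> f \<in> K"
    and g: "g \<in> Cfun" and ng: "g \<notin> weak_top closure_of K"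
  shows "\<exists>P\<in>Prob. expect P g > 0 \<and> (\<forall>k\<in>K. expect P k \<le> 0)"
proof -
  from ng g obtain T where T: "openin weak_top T" "g \<in> T" "\<forall>y\<in>K. y \<notin> T"
    unfolding in_closure_of topspace_weak by blast
  from weak_nbhd[OF T(1,2)] obtain n :: nat and \<phi> \<epsilon> where
    nb: "\<epsilon> > 0" "\<forall>i<n. \<phi> i \<in> ca" "{f \<in> Cfun. \<forall>i<n. \<bar>pairing (\<phi> i) f - pairing (\<phi> i) g\<bar> < \<epsilon>} \<subseteq> T"
    by blast
  define tr where "tr k = (\<lambda>i. if i < n then pairing (\<phi> i) k else 0)" for k
  define C where "C = tr ` K"
  define p where "p = (\<lambda>i. pairing (\<phi> i) g)"
  have "\<exists>a. (\<Sum>i<n. a i * p i) > 0 \<and> (\<forall>c\<in>C. (\<Sum>i<n. a i * c i) \<le> 0)"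
  proof (rule cone_sep)
    have "tr (\<lambda>_. 0) = (\<lambda>_. 0)" by (auto simp: tr_def pairing_def)
    then show "(\<lambda>_. 0) \<in> C" unfolding C_def using K0 by (metis image_eqI)
    show "(\<lambda>i. u i + v i) \<in> C" if uv: "u \<in> C" "v \<in> C" for u v
    proof -
      obtain k1 k2 where k: "k1 \<in> K" "k2 \<in> K" "u = tr k1" "v = tr k2" using uv unfolding C_def image_iff by blast
      have "(\<lambda>i. u i + v i) = tr (\<lambda>x. k1 x + k2 x)"
      proof
        fix i
        show "u i + v i = tr (\<lambda>x. k1 x + k2 x) i"
        proof (cases "i < n")
          case True
          then have "\<phi> i \<in> ca" using nb(2) by simp
          moreover have "k1 \<in> Cfun" "k2 \<in> Cfun" using k KC by auto
          ultimately show ?thesis using True k by (simp add: tr_def pairing_add[OF cpt])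
        qed (simp add: k tr_def)
      qed
      then show ?thesis unfolding C_def using Kadd[OF k(1,2)] by simp
    qed
    show "(\<lambda>i. t * u i) \<in> C" if ut: "u \<in> C" "t > 0" for u t
    proof -
      obtain k where k: "k \<in> K" "u = tr k" using ut unfolding C_def image_iff by blast
      have "(\<lambda>i. t * u i) = tr (\<lambda>x. t * k x)"
        using k by (auto simp: tr_def pairing_scale)
      then show ?thesis unfolding C_def using Kscale[OF k(1) ut(2)] by simp
    qed
    show "\<epsilon> > 0" by fact
    show "\<exists>i<n. \<bar>c i - p i\<bar> \<ge> \<epsilon>" if cC: "c \<in> C" for c
    proof -
      obtain k where k: "k \<in> K" "c = tr k" using cC unfolding C_def image_iff by blast
      have "k \<notin> T" using T(3) k(1) by auto
      then have "\<not> (\<forall>i<n. \<bar>pairing (\<phi> i) k - pairing (\<phi> i) g\<bar> < \<epsilon>)" using nb(3) k(1) KC by auto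
      then show ?thesis using k by (auto simp: tr_def p_def not_less)
    qed
  qed
  then obtain a where a: "(\<Sum>i<n. a i * p i) > 0" "\<And>c. c \<in> C \<Longrightarrow> (\<Sum>i<n. a i * c i) \<le> 0" by blast
  define L where "L f = (\<Sum>i<n. a i * pairing (\<phi> i) f)" for f
  have Lg: "L g > 0" using a(1) by (simp add: L_def p_def)
  have LK: "L k \<le> 0" if "k \<in> K" for k
  proof -
    have "(\<Sum>i<n. a i * tr k i) \<le> 0" using a(2) that by (auto simp: C_def)
    moreover have "(\<Sum>i<n. a i * tr k i) = L k" unfolding L_def tr_def by (intro sum.cong) auto
    ultimately show ?thesis by simp
  qed
  define Mp where "Mp = posm \<phi> a n"
  define Mn where "Mn = negm \<phi> a n"
  from combo[OF nb(2), of a] have fMp: "fin_borel Mp" and fMn: "fin_borel Mn" and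
    rep: "\<And>f B. f \<in> borel_measurable borel \<Longrightarrow> (\<forall>x. \<bar>f x\<bar> \<le> B) \<Longrightarrow> integral\<^sup>L Mp f - integral\<^sup>L Mn f = L f"
    unfolding Mp_def Mn_def L_def by auto
  have repC: "integral\<^sup>L Mp f - integral\<^sup>L Mn f = L f" if fC: "f \<in> Cfun" for f
  proof -
    obtain B where "\<forall>x. \<bar>f x\<bar> \<le> B" using cfun_bdd[OF cpt fC] by blast
    then show ?thesis using rep cfun_bm[OF fC] by blast
  qed
  have Lminus: "L (\<lambda>x. - f x) = - L f" for f
    unfolding L_def pairing_minus by (simp add: sum_negf)
  have pos: "integral\<^sup>L Mn f \<le> integral\<^sup>L Mp f"
    if f: "continuous_on UNIV f" "\<And>x. 0 \<le> f x" "\<And>x. f x \<le> 1" for f :: "'a \<Rightarrow> real"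
  proof -
    have fC: "f \<in> Cfun" using f(1) by (simp add: Cfun_def)
    have mC: "(\<lambda>x. - f x) \<in> Cfun" using f(1) by (simp add: Cfun_def continuous_on_minus)
    have "(\<lambda>x. - f x) \<in> K" using f(2) by (intro Kneg[OF mC]) auto
    then have "L (\<lambda>x. - f x) \<le> 0" by (rule LK)
    then have "L f \<ge> 0" by (simp add: Lminus)
    then show ?thesis using repC[OF fC] by simp
  qed
  have sMp: "sets Mp = sets borel" and fmp: "finite_measure Mp" using fMp by (auto simp: fin_borel_def)
  have sMn: "sets Mn = sets borel" and fmn: "finite_measure Mn" using fMn by (auto simp: fin_borel_def)
  have le: "emeasure Mn A \<le> emeasure Mp A" if "A \<in> sets Mp" for A
  proof -
    have "measure Mn A \<le> measure Mp A" using that sMp by (intro pos_measure[OF fMp fMn pos]) auto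
    then show ?thesis
      using that sMp sMn by (simp add: finite_measure.emeasure_eq_measure[OF fmp] finite_measure.emeasure_eq_measure[OF fmn])
  qed
  define Q where "Q = diff_measure Mp Mn"
  have sQ: "sets Q = sets borel" using sMp by (simp add: Q_def)
  have emQ: "emeasure Q A = emeasure Mp A - emeasure Mn A" if "A \<in> sets Mp" for A
    unfolding Q_def using fmp fmn sMp sMn le that by (intro emeasure_diff_measure) auto
  have spMp: "space Mp = UNIV" using sets_eq_imp_space_eq[OF sMp] by simp
  have spQ: "space Q = UNIV" using sets_eq_imp_space_eq[OF sQ] by simp
  have fmQ: "finite_measure Q"
  proof (rule finite_measureI)
    have "emeasure Q (space Q) \<le> emeasure Mp (space Mp)"
      using emQ[of UNIV] spQ spMp sets.top[of Mp] by (simp add: diff_le_self_ennreal)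
    then show "emeasure Q (space Q) \<noteq> \<infinity>"
      using finite_measure.emeasure_finite[OF fmp] by (metis infinity_ennreal_def neq_top_trans)
  qed
  have fQ: "fin_borel Q" using sQ fmQ by (simp add: fin_borel_def)
  have splitQ: "emeasure Mp A = emeasure Q A + emeasure Mn A" if "A \<in> sets Mp" for A
    using emQ[OF that] le[OF that] by (simp add: diff_add_cancel_ennreal)
  have LQ: "L f = integral\<^sup>L Q f" if fC: "f \<in> Cfun" for f
  proof -
    obtain B where B: "\<And>x. \<bar>f x\<bar> \<le> B" using cfun_bdd[OF cpt fC] by blast
    have "integral\<^sup>L Mp f = integral\<^sup>L Q f + integral\<^sup>L Mn f"
      using sQ sMp sMn fmQ fmn splitQ fb_meas[OF fMp cfun_bm[OF fC]] B
      by (intro integral_split[where B=B]) auto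
    then show ?thesis using repC[OF fC] by simp
  qed
  define m where "m = measure Q (space Q)"
  have m0: "m \<ge> 0" by (simp add: m_def)
  show ?thesis
  proof (cases "m = 0")
    case True
    obtain B where B: "\<And>x. \<bar>g x\<bar> \<le> B" using cfun_bdd[OF cpt g] by blast
    have ig: "integrable Q g" using fb_integrable[OF fQ cfun_bm[OF g] B] .
    have ic: "integrable Q (\<lambda>_. B)" using fmQ by (simp add: finite_measure.integrable_const)
    have "integral\<^sup>L Q g \<le> integral\<^sup>L Q (\<lambda>_. B)" using ig ic B by (intro integral_mono) (auto simp: abs_le_iff)
    also have "\<dots> = 0" using True by (simp add: m_def)
    finally have "L g \<le> 0" using LQ[OF g] by simp
    with Lg show ?thesis by simp
  next
    case False
    then have mpos: "m > 0" using m0 by simp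
    define P where "P = scm (1/m) Q"
    have sP: "sets P = sets borel" using sQ by (simp add: P_def scm_def)
    have "emeasure P (space P) = ennreal (1/m) * emeasure Q (space Q)"
      unfolding P_def scm_def by (simp add: emeasure_density_const)
    also have "emeasure Q (space Q) = ennreal m"
      unfolding m_def using finite_measure.emeasure_eq_measure[OF fmQ] by simp
    also have "ennreal (1/m) * ennreal m = 1" using mpos by (simp flip: ennreal_mult)
    finally have "prob_space P" by (rule prob_spaceI)
    then have PP: "P \<in> Prob" using sP by (simp add: Prob_def)
    have EP: "expect P f = L f / m" if "f \<in> Cfun" for f
      unfolding expect_def P_def using integral_scm[OF fQ _ cfun_bm[OF that], of "1/m"] mpos LQ[OF that]
      by simp
    show ?thesis
    proof (intro bexI[OF _ PP] conjI ballI)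
      show "expect P g > 0" using EP[OF g] Lg mpos by simp
      fix k assume "k \<in> K"
      then show "expect P k \<le> 0" using EP[of k] KC LK[of k] mpos by (auto simp: divide_nonpos_pos)
    qed
  qed
qed

lemma prob_fin_borel: "P \<in> Prob \<Longrightarrow> fin_borel P"
  by (auto simp: Prob_def fin_borel_def prob_space_def)

lemma expect_mono:
  fixes f h :: "'a::metric_space \<Rightarrow> real"
  assumes "compact (UNIV :: 'a set)" "P \<in> Prob" "f \<in> Cfun" "h \<in> Cfun" "\<And>x. f x \<le> h x"
  shows "expect P f \<le> expect P h"
proof -
  obtain B1 B2 where B: "\<And>x. \<bar>f x\<bar> \<le> B1" "\<And>x. \<bar>h x\<bar> \<le> B2" using cfun_bdd assms by metis
  have "integrable P f" "integrable P h"
    using prob_fin_borel[OF assms(2)] B cfun_bm assms(3,4) by (auto intro: fb_integrable)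
  then show ?thesis unfolding expect_def using assms(5) by (intro integral_mono) auto
qed

lemma expect_diff:
  fixes f h :: "'a::metric_space \<Rightarrow> real"
  assumes "compact (UNIV :: 'a set)" "P \<in> Prob" "f \<in> Cfun" "h \<in> Cfun"
  shows "expect P (\<lambda>x. f x - h x) = expect P f - expect P h"
proof -
  obtain B1 B2 where B: "\<And>x. \<bar>f x\<bar> \<le> B1" "\<And>x. \<bar>h x\<bar> \<le> B2" using cfun_bdd assms by metis
  have "integrable P f" "integrable P h"
    using prob_fin_borel[OF assms(2)] B cfun_bm assms(3,4) by (auto intro: fb_integrable)
  then show ?thesis unfolding expect_def by simp
qed

lemma expect_minus: "expect P (\<lambda>x. - f x) = - expect P f"
  unfolding expect_def by simp

lemma cfun_const: "(\<lambda>_. c) \<in> Cfun" by (simp add: Cfun_def)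
lemma cfun_add: "f \<in> Cfun \<Longrightarrow> h \<in> Cfun \<Longrightarrow> (\<lambda>x. f x + h x) \<in> Cfun"
  by (simp add: Cfun_def continuous_on_add)
lemma cfun_diff: "f \<in> Cfun \<Longrightarrow> h \<in> Cfun \<Longrightarrow> (\<lambda>x. f x - h x) \<in> Cfun"
  by (simp add: Cfun_def continuous_on_diff)
lemma cfun_scale: "f \<in> Cfun \<Longrightarrow> (\<lambda>x. t * f x) \<in> Cfun"
  by (simp add: Cfun_def continuous_on_mult_left)
lemma cfun_minus: "f \<in> Cfun \<Longrightarrow> (\<lambda>x. - f x) \<in> Cfun"
  by (simp add: Cfun_def continuous_on_minus)

theorem mainTheorem10:
  fixes \<Gamma> :: "'y::metric_space measure \<Rightarrow> 'v set"
    and V :: "'v set"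
    and s \<nu> :: "'y \<Rightarrow> 'v \<Rightarrow> real"
    and \<gamma> :: 'v
  assumes "compact (UNIV :: 'y set)"
    and "\<forall>\<phi>\<in>Prob. \<Gamma> \<phi> \<subseteq> V"
    and "identifies \<nu> V \<Gamma>"
    and "elicits s V \<Gamma>"
    and "convex_fset (spr s V)"
    and "\<gamma> \<in> V"
    and "level_set \<Gamma> \<gamma> \<noteq> {}"
  shows "H_s s V \<gamma> = H_nu \<nu> \<gamma>"
proof -
  note cpt = assms(1)
  have nuC: "(\<lambda>y. \<nu> y c) \<in> Cfun" if "c \<in> V" for c using assms(3) that by (simp add: identifies_def)
  have ident: "expect P (\<lambda>y. \<nu> y \<gamma>) = 0 \<longleftrightarrow> \<gamma> \<in> \<Gamma> P" if "P \<in> Prob" for P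
    using assms(3,6) that by (simp add: identifies_def)
  have sC: "(\<lambda>y. s y c) \<in> Cfun" if "c \<in> V" for c using assms(4) that by (simp add: elicits_def)
  have elic: "\<Gamma> P = {c \<in> V. \<forall>c'\<in>V. expect P (\<lambda>y. s y c) \<le> expect P (\<lambda>y. s y c')}" if "P \<in> Prob" for P
    using assms(4) that by (simp add: elicits_def)
  define As where "As = {g \<in> Cfun. \<exists>\<beta>\<ge>0. \<exists>c\<in>V. \<forall>y. g y \<le> \<beta> * (s y \<gamma> - s y c)}"
  define An where "An = {g \<in> Cfun. \<exists>\<alpha>::real. \<forall>y. g y \<le> \<alpha> * \<nu> y \<gamma>}"
  have Hs: "H_s s V \<gamma> = weak_top closure_of As" by (simp add: H_s_def As_def)
  have Hn: "H_nu \<nu> \<gamma> = weak_top closure_of An" by (simp add: H_nu_def An_def)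
  have g\<gamma>: "\<gamma> \<in> V" by fact
  have An_props: "An \<subseteq> Cfun" "(\<lambda>_. 0) \<in> An"
    "\<And>u v. u \<in> An \<Longrightarrow> v \<in> An \<Longrightarrow> (\<lambda>x. u x + v x) \<in> An"
    "\<And>u t. u \<in> An \<Longrightarrow> t > 0 \<Longrightarrow> (\<lambda>x. t * u x) \<in> An"
    "\<And>f. f \<in> Cfun \<Longrightarrow> (\<forall>x. f x \<le> 0) \<Longrightarrow> f \<in> An"
  proof -
    show "An \<subseteq> Cfun" by (auto simp: An_def)
    show "(\<lambda>_. 0) \<in> An" by (auto simp: An_def cfun_const intro!: exI[of _ 0])
    show "(\<lambda>x. u x + v x) \<in> An" if "u \<in> An" "v \<in> An" for u v
    proof -
      obtain a1 a2 where "\<forall>y. u y \<le> a1 * \<nu> y \<gamma>" "\<forall>y. v y \<le> a2 * \<nu> y \<gamma>" "u \<in> Cfun" "v \<in> Cfun"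
        using \<open>u \<in> An\<close> \<open>v \<in> An\<close> by (auto simp: An_def)
      then show ?thesis unfolding An_def
        by (auto intro!: exI[of _ "a1 + a2"] cfun_add simp: distrib_right add_mono)
    qed
    show "(\<lambda>x. t * u x) \<in> An" if "u \<in> An" "t > 0" for u t
    proof -
      obtain a where "\<forall>y. u y \<le> a * \<nu> y \<gamma>" "u \<in> Cfun"
        using \<open>u \<in> An\<close> by (auto simp: An_def)
      then show ?thesis unfolding An_def using \<open>t > 0\<close>
        by (auto intro!: exI[of _ "t * a"] cfun_scale simp: mult.assoc mult_left_mono)
    qed
    show "f \<in> An" if "f \<in> Cfun" "\<forall>x. f x \<le> 0" for f
      using that unfolding An_def by (auto intro!: exI[of _ 0])
  qed
  have As_props: "As \<subseteq> Cfun" "(\<lambda>_. 0) \<in> As"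
    "\<And>u v. u \<in> As \<Longrightarrow> v \<in> As \<Longrightarrow> (\<lambda>x. u x + v x) \<in> As"
    "\<And>u t. u \<in> As \<Longrightarrow> t > 0 \<Longrightarrow> (\<lambda>x. t * u x) \<in> As"
    "\<And>f. f \<in> Cfun \<Longrightarrow> (\<forall>x. f x \<le> 0) \<Longrightarrow> f \<in> As"
  proof -
    show "As \<subseteq> Cfun" by (auto simp: As_def)
    show "(\<lambda>_. 0) \<in> As" using g\<gamma> by (auto simp: As_def cfun_const intro!: exI[of _ 0])
    show "(\<lambda>x. u x + v x) \<in> As" if "u \<in> As" "v \<in> As" for u v
    proof -
      obtain b1 c1 where u: "b1 \<ge> 0" "c1 \<in> V" "\<forall>y. u y \<le> b1 * (s y \<gamma> - s y c1)" "u \<in> Cfun"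
        using \<open>u \<in> As\<close> by (auto simp: As_def)
      obtain b2 c2 where v: "b2 \<ge> 0" "c2 \<in> V" "\<forall>y. v y \<le> b2 * (s y \<gamma> - s y c2)" "v \<in> Cfun"
        using \<open>v \<in> As\<close> by (auto simp: As_def)
      have uvC: "(\<lambda>x. u x + v x) \<in> Cfun" using u(4) v(4) by (rule cfun_add)
      show ?thesis
      proof (cases "b1 + b2 = 0")
        case True
        then have "b1 = 0" "b2 = 0" using u(1) v(1) by auto
        then have "\<forall>y. u y + v y \<le> 0 * (s y \<gamma> - s y c1)" using u(3) v(3) by (simp add: add_nonpos_nonpos)
        then show ?thesis using uvC u(2) unfolding As_def by blast
      next
        case False
        define B where "B = b1 + b2"
        have Bpos: "B > 0" using False u(1) v(1) by (simp add: B_def)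
        define t where "t = b1 / B"
        have t01: "0 \<le> t" "t \<le> 1" using u(1) v(1) Bpos by (auto simp: t_def B_def field_simps)
        have spr1: "(\<lambda>y. s y c1) \<in> spr s V" using u(2) sC[OF u(2)] by (auto simp: spr_def)
        have spr2: "(\<lambda>y. s y c2) \<in> spr s V" using v(2) sC[OF v(2)] by (auto simp: spr_def)
        have "(\<lambda>y. t * s y c1 + (1 - t) * s y c2) \<in> spr s V"
          using assms(5)[unfolded convex_fset_def, rule_format, OF spr1 spr2, of t] t01 by simp
        then obtain c where c: "c \<in> V" "\<forall>y. s y c \<le> t * s y c1 + (1 - t) * s y c2"
          by (auto simp: spr_def)
        have "u y + v y \<le> B * (s y \<gamma> - s y c)" for y
        proof -
          have "u y + v y \<le> b1 * (s y \<gamma> - s y c1) + b2 * (s y \<gamma> - s y c2)"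
            using u(3) v(3) by (simp add: add_mono)
          also have "\<dots> = B * (s y \<gamma> - (t * s y c1 + (1 - t) * s y c2))"
          proof -
            have Bt: "B * t = b1" using Bpos by (simp add: t_def)
            have B1t: "B * (1 - t) = b2" using Bpos by (simp add: t_def B_def field_simps)
            have "B * (s y \<gamma> - (t * s y c1 + (1 - t) * s y c2)) = B * s y \<gamma> - (B * t) * s y c1 - (B * (1 - t)) * s y c2"
              by (simp add: algebra_simps)
            also have "\<dots> = b1 * (s y \<gamma> - s y c1) + b2 * (s y \<gamma> - s y c2)"
              unfolding Bt B1t by (simp add: B_def algebra_simps)
            finally show ?thesis by simp
          qed
          also have "\<dots> \<le> B * (s y \<gamma> - s y c)"
            using c(2)[rule_format, of y] Bpos by (intro mult_left_mono) auto
          finally show ?thesis .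
        qed
        then show ?thesis using uvC c(1) Bpos unfolding As_def by (auto intro!: exI[of _ B])
      qed
    qed
    show "(\<lambda>x. t * u x) \<in> As" if "u \<in> As" "t > 0" for u t
    proof -
      obtain b c where "b \<ge> 0" "c \<in> V" "\<forall>y. u y \<le> b * (s y \<gamma> - s y c)" "u \<in> Cfun"
        using \<open>u \<in> As\<close> by (auto simp: As_def)
      then show ?thesis unfolding As_def using \<open>t > 0\<close>
        by (auto intro!: exI[of _ "t * b"] bexI[of _ c] cfun_scale simp: mult.assoc mult_left_mono)
    qed
    show "f \<in> As" if "f \<in> Cfun" "\<forall>x. f x \<le> 0" for f
      using that g\<gamma> unfolding As_def by (auto intro!: exI[of _ 0])
  qed
  have sub1: "As \<subseteq> weak_top closure_of An"
  proof
    fix g assume gA: "g \<in> As"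
    then obtain \<beta> c where b: "\<beta> \<ge> 0" "c \<in> V" "\<forall>y. g y \<le> \<beta> * (s y \<gamma> - s y c)" and gC: "g \<in> Cfun"
      by (auto simp: As_def)
    show "g \<in> weak_top closure_of An"
    proof (rule ccontr)
      assume "g \<notin> weak_top closure_of An"
      from sep_prob[OF cpt An_props gC this] obtain P where
        P: "P \<in> Prob" "expect P g > 0" "\<And>k. k \<in> An \<Longrightarrow> expect P k \<le> 0" by blast
      have "(\<lambda>y. \<nu> y \<gamma>) \<in> An" using nuC[OF g\<gamma>] by (auto simp: An_def intro!: exI[of _ 1])
      moreover have "(\<lambda>y. - \<nu> y \<gamma>) \<in> An" using cfun_minus[OF nuC[OF g\<gamma>]] by (auto simp: An_def intro!: exI[of _ "-1"])
      ultimately have "expect P (\<lambda>y. \<nu> y \<gamma>) \<le> 0" "expect P (\<lambda>y. - \<nu> y \<gamma>) \<le> 0"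
        using P(3) by auto
      then have "expect P (\<lambda>y. \<nu> y \<gamma>) = 0" by (simp add: expect_minus)
      then have "\<gamma> \<in> \<Gamma> P" using ident[OF P(1)] by simp
      then have "expect P (\<lambda>y. s y \<gamma>) \<le> expect P (\<lambda>y. s y c)" using elic[OF P(1)] b(2) by auto
      moreover have "expect P g \<le> expect P (\<lambda>y. \<beta> * (s y \<gamma> - s y c))"
        using b(3) gC sC[OF g\<gamma>] sC[OF b(2)] by (intro expect_mono[OF cpt P(1)] cfun_scale cfun_diff) auto
      moreover have "expect P (\<lambda>y. \<beta> * (s y \<gamma> - s y c)) = \<beta> * (expect P (\<lambda>y. s y \<gamma>) - expect P (\<lambda>y. s y c))"
        using expect_diff[OF cpt P(1) sC[OF g\<gamma>] sC[OF b(2)]] by (simp add: expect_scale)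
      ultimately have "expect P g \<le> 0" using b(1)
        by (smt (verit, best) mult_nonneg_nonpos)
      with P(2) show False by simp
    qed
  qed
  have sub2: "An \<subseteq> weak_top closure_of As"
  proof
    fix g assume gA: "g \<in> An"
    then obtain \<alpha> where a: "\<forall>y. g y \<le> \<alpha> * \<nu> y \<gamma>" and gC: "g \<in> Cfun"
      by (auto simp: An_def)
    show "g \<in> weak_top closure_of As"
    proof (rule ccontr)
      assume "g \<notin> weak_top closure_of As"
      from sep_prob[OF cpt As_props gC this] obtain P where
        P: "P \<in> Prob" "expect P g > 0" "\<And>k. k \<in> As \<Longrightarrow> expect P k \<le> 0" by blast
      have "expect P (\<lambda>y. s y \<gamma>) \<le> expect P (\<lambda>y. s y c)" if c: "c \<in> V" for c
      proof -
        have "(\<lambda>y. s y \<gamma> - s y c) \<in> As" using c sC[OF g\<gamma>] sC[OF c]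
          by (auto simp: As_def intro!: cfun_diff exI[of _ 1])
        then have "expect P (\<lambda>y. s y \<gamma> - s y c) \<le> 0" by (rule P(3))
        then show ?thesis using expect_diff[OF cpt P(1) sC[OF g\<gamma>] sC[OF c]] by simp
      qed
      then have "\<gamma> \<in> \<Gamma> P" using elic[OF P(1)] g\<gamma> by auto
      then have E0: "expect P (\<lambda>y. \<nu> y \<gamma>) = 0" using ident[OF P(1)] by simp
      have "expect P g \<le> expect P (\<lambda>y. \<alpha> * \<nu> y \<gamma>)"
        using a gC nuC[OF g\<gamma>] by (intro expect_mono[OF cpt P(1)] cfun_scale) auto
      also have "\<dots> = 0" using E0 by (simp add: expect_scale)
      finally show False using P(2) by simp
    qed
  qed
  show ?thesis
  proof
    show "H_s s V \<gamma> \<subseteq> H_nu \<nu> \<gamma>" unfolding Hs Hn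
      by (intro closure_of_minimal sub1 closedin_closure_of)
    show "H_nu \<nu> \<gamma> \<subseteq> H_s s V \<gamma>" unfolding Hs Hn
      by (intro closure_of_minimal sub2 closedin_closure_of)
  qed
qed

end
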